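(* Let $\mathcal{A}$ be a finite-dimensional commutative $\mathbb{K}$-algebra and let $\Lambda:\mathcal{A}\to\mathbb{K}$ be a linear map such that the rank of the bilinear form $(a,b)\mapsto\Lambda(ab)$ on $\mathcal{A}$ is maximal among all linear maps $\mathcal{A}\to\mathbb{K}$. Then $\mathcal{R}(\Lambda)\subseteq\mathrm{Rad}(\mathcal{A})$.
   Context: $\mathbb{K}$ is an algebraically closed field. $\mathcal{R}(\Lambda):=\{a\in\mathcal{A}:\Lambda(ab)=0\ \forall b\in\mathcal{A}\}$. $\mathrm{Rad}(\mathcal{A})$ is the radical of $\mathcal{A}$ (the nilradical, which for a finite-dimensional commutative algebra equals the intersection of its maximal ideals). *)

theory Defs
  imports "HOL-Computational_Algebra.Polynomial" "HOL-Library.Function_Algebras"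
begin

definition comm_K_algebra :: "('k::field \<Rightarrow> 'a::comm_ring_1 \<Rightarrow> 'a) \<Rightarrow> bool" where
  "comm_K_algebra scale \<longleftrightarrow> vector_space scale \<and>
     (\<forall>c a b. scale c (a * b) = scale c a * b)"

definition fin_dim :: "('k::field \<Rightarrow> 'a::ab_group_add \<Rightarrow> 'a) \<Rightarrow> bool" where
  "fin_dim scale \<longleftrightarrow> (\<exists>B. finite B \<and> module.span scale B = UNIV)"

text \<open>Rank of the bilinear form (a,b) \<mapsto> \<Lambda>(ab): dimension of the image of
  the induced map A \<rightarrow> A^*, a \<mapsto> (b \<mapsto> \<Lambda>(ab)), inside the K-space of functions A \<rightarrow> K.\<close>
definition bform_rank :: "('k::field \<Rightarrow> 'a::comm_ring_1 \<Rightarrow> 'a) \<Rightarrow> ('a \<Rightarrow> 'k) \<Rightarrow> nat" where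
  "bform_rank scale \<Lambda> =
     vector_space.dim (\<lambda>(c::'k) (f::'a \<Rightarrow> 'k) x. c * f x) ((\<lambda>a b. \<Lambda> (a * b)) ` UNIV)"

definition RLam :: "('a::comm_ring_1 \<Rightarrow> 'k::field) \<Rightarrow> 'a set" where
  "RLam \<Lambda> = {a. \<forall>b. \<Lambda> (a * b) = 0}"

definition Rad :: "'a::comm_ring_1 set" where
  "Rad = {a. \<exists>n. a ^ n = 0}"

end

theory Submission
  imports Defs
begin

lemma chain_stab:
  fixes scale :: "'k::field \<Rightarrow> 'a::comm_ring_1 \<Rightarrow> 'a" and a :: 'a
  assumes vs: "vector_space scale" and comp: "\<forall>c a b. scale c (a*b) = scale c a * b"
    and fd: "fin_dim scale"
  shows "\<exists>n. range (\<lambda>x. a^Suc n * x) = range (\<lambda>x. a^n * x)"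
proof -
  interpret V: vector_space scale by (rule vs)
  from fd obtain B where B: "finite B" "V.span B = UNIV" unfolding fin_dim_def by blast
  obtain B0 where B0: "V.independent B0" "UNIV \<subseteq> V.span B0"
    using V.basis_exists[of UNIV] by blast
  have fB0: "finite B0" using V.independent_span_bound[OF B(1) B0(1)] B(2) by auto
  interpret F: finite_dimensional_vector_space scale B0
    by unfold_locales (use fB0 B0 in auto)
  define R where "R n = range (\<lambda>x. a^n * x)" for n
  have sc: "scale c (y * x) = y * scale c x" for c x y
    using comp by (metis mult.commute)
  have sub: "V.subspace (R n)" for n
    unfolding R_def V.subspace_def
  proof (intro conjI ballI allI)
    show "0 \<in> range (\<lambda>x. a^n * x)" by (rule range_eqI[of _ _ 0]) simp
  next
    fix x y assume "x \<in> range (\<lambda>x. a^n * x)" "y \<in> range (\<lambda>x. a^n * x)"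
    then obtain u v where "x = a^n*u" "y = a^n*v" by auto
    then show "x + y \<in> range (\<lambda>x. a^n * x)"
      by (intro range_eqI[of _ _ "u+v"]) (simp add: distrib_left)
  next
    fix c x assume "x \<in> range (\<lambda>x. a^n * x)"
    then obtain u where "x = a^n*u" by auto
    then show "scale c x \<in> range (\<lambda>x. a^n * x)"
      by (intro range_eqI[of _ _ "scale c u"]) (simp add: sc)
  qed
  have mono: "R (Suc n) \<subseteq> R n" for n
  proof
    fix y assume "y \<in> R (Suc n)"
    then obtain x where "y = a^Suc n * x" unfolding R_def by auto
    then have "y = a^n * (a*x)" by (simp add: mult_ac)
    then show "y \<in> R n" unfolding R_def by blast
  qed
  show ?thesis
  proof (rule ccontr)
    assume "\<not> ?thesis"
    hence "R (Suc n) \<noteq> R n" for n unfolding R_def by blast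
    hence "R (Suc n) \<subset> R n" for n using mono[of n] by blast
    hence lt: "V.dim (R (Suc n)) < V.dim (R n)" for n
      using F.dim_psubset V.span_eq_iff[THEN iffD2, OF sub] by metis
    have "V.dim (R n) + n \<le> V.dim (R 0)" for n
    proof (induction n)
      case 0 then show ?case by simp
    next
      case (Suc n) then show ?case using lt[of n] by simp
    qed
    from this[of "Suc (V.dim (R 0))"] show False by simp
  qed
qed

lemma idem_exists:
  fixes scale :: "'k::field \<Rightarrow> 'a::comm_ring_1 \<Rightarrow> 'a" and a :: 'a
  assumes vs: "vector_space scale" and comp: "\<forall>c a b. scale c (a*b) = scale c a * b"
    and fd: "fin_dim scale"
  shows "\<exists>N c. N \<ge> 1 \<and> a^N = a^(2*N) * c"
proof -
  define R where "R n = range (\<lambda>x. a^n * x)" for n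
  obtain n where n: "R (Suc n) = R n" using chain_stab[OF vs comp fd, of a] R_def by auto
  have RS: "R (Suc m) = (\<lambda>y. a*y) ` R m" for m
    unfolding R_def by (auto simp: image_image mult.assoc)
  have Rk: "R (n + k) = R n" for k
  proof (induction k)
    case 0 then show ?case by simp
  next
    case (Suc k)
    have "R (n + Suc k) = (\<lambda>y. a*y) ` R (n+k)" using RS[of "n+k"] by simp
    also have "\<dots> = R (Suc n)" using Suc RS[of n] by simp
    finally show ?case using n by simp
  qed
  have "a^Suc n \<in> R (Suc n)" unfolding R_def by (rule range_eqI[of _ _ 1]) simp
  also have "R (Suc n) = R (2 * Suc n)" using Rk[of "Suc (Suc n)"] Rk[of 1] by (simp add: mult_2)
  finally obtain c where "a^Suc n = a^(2*Suc n) * c" unfolding R_def by auto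
  then show ?thesis by (intro exI[of _ "Suc n"] exI[of _ c]) simp
qed

lemma rank_increase:
  fixes scale :: "'k::field \<Rightarrow> 'a::comm_ring_1 \<Rightarrow> 'a" and \<Lambda> :: "'a \<Rightarrow> 'k"
  assumes alg: "comm_K_algebra scale" and fd: "fin_dim scale"
    and lin: "Vector_Spaces.linear scale (*) \<Lambda>"
    and ee: "e*e = e" and en: "e \<noteq> 0" and ez: "\<forall>x. \<Lambda> (e*x) = 0"
  shows "\<exists>M. Vector_Spaces.linear scale (*) M \<and> bform_rank scale \<Lambda> < bform_rank scale M"
proof -
  have vs: "vector_space scale" and comp: "\<forall>c a b. scale c (a*b) = scale c a * b"
    using alg unfolding comm_K_algebra_def by auto
  interpret V: vector_space scale by (rule vs)
  have vsk: "vector_space ((*)::'k\<Rightarrow>'k\<Rightarrow>'k)"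
    by unfold_locales (auto simp: algebra_simps)
  have "vector_space_pair scale ((*)::'k\<Rightarrow>'k\<Rightarrow>'k)"
    unfolding vector_space_pair_def using vs vsk by auto
  then interpret VP: vector_space_pair scale "(*)::'k\<Rightarrow>'k\<Rightarrow>'k" .
  interpret FS: vector_space "\<lambda>(c::'k) (f::'a\<Rightarrow>'k) x. c * f x"
    by unfold_locales (simp_all add: fun_eq_iff distrib_left distrib_right)
  from fd obtain B where B: "finite B" "V.span B = UNIV" unfolding fin_dim_def by blast
  have sc: "scale c (y * x) = y * scale c x" for c x y
    using comp by (metis mult.commute)
  have LA: "\<Lambda> (x+y) = \<Lambda> x + \<Lambda> y" and LS: "\<Lambda> (scale c x) = c * \<Lambda> x" for x y c
    using lin[unfolded Vector_Spaces.linear_iff] by auto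
  have L0: "\<Lambda> 0 = 0" using LS[of 0 0] by simp
  have LD: "\<Lambda> (x - y) = \<Lambda> x - \<Lambda> y" for x y
    using LA[of "x-y" y] by simp
  have "V.independent {e}" using en by simp
  then obtain Bx where Bx: "{e} \<subseteq> Bx" "V.independent Bx"
    using V.maximal_independent_subset_extend[of "{e}" UNIV] by blast
  obtain \<mu> where mu: "Vector_Spaces.linear scale (*) \<mu>" "\<forall>x\<in>Bx. \<mu> x = (if x = e then 1 else 0)"
    using VP.linear_independent_extend[OF Bx(2), of "\<lambda>x. if x = e then (1::'k) else 0"] by blast
  have mue: "\<mu> e = 1" using mu Bx by auto
  have MA: "\<mu> (x+y) = \<mu> x + \<mu> y" and MS: "\<mu> (scale c x) = c * \<mu> x" for x y c
    using mu(1)[unfolded Vector_Spaces.linear_iff] by auto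
  have M0: "\<mu> 0 = 0" using MS[of 0 0] by simp
  define M where "M x = \<Lambda> x + \<mu> (e*x)" for x
  have linM: "Vector_Spaces.linear scale (*) M"
    unfolding Vector_Spaces.linear_iff
  proof (intro conjI allI)
    show "vector_space scale" by (rule vs)
    show "vector_space ((*)::'k\<Rightarrow>'k\<Rightarrow>'k)" by (rule vsk)
    fix x y :: 'a
    show "M (x + y) = M x + M y" unfolding M_def by (simp add: LA MA distrib_left)
  next
    fix c x
    have "e * scale c x = scale c (e*x)" by (simp add: sc)
    then show "M (scale c x) = c * M x" unfolding M_def by (simp add: LS MS distrib_left)
  qed
  define f where "f a = (\<lambda>b. \<Lambda> (a*b))" for a
  define f' where "f' a = (\<lambda>b. M (a*b))" for a
  have f'A: "f' (x+y) = f' x + f' y" for x y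
    using linM[unfolded Vector_Spaces.linear_iff] unfolding f'_def by (auto simp: fun_eq_iff distrib_right)
  have f'S: "f' (scale c x) = (\<lambda>b. c * f' x b)" for x c
  proof -
    have "M (scale c x * b) = c * M (x*b)" for b
      using linM[unfolded Vector_Spaces.linear_iff] comp by metis
    then show ?thesis unfolding f'_def by auto
  qed
  have f'0: "f' 0 = 0" using f'A[of 0 0] by simp
  have spanf': "range f' \<subseteq> FS.span (f' ` B)"
  proof -
    have "V.span B \<subseteq> {a. f' a \<in> FS.span (f' ` B)}"
    proof (rule V.span_minimal)
      show "B \<subseteq> {a. f' a \<in> FS.span (f' ` B)}" by (auto intro: FS.span_base)
      show "V.subspace {a. f' a \<in> FS.span (f' ` B)}"
        unfolding V.subspace_def
        by (auto simp: f'0 f'A f'S FS.span_zero intro: FS.span_add FS.span_scale)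
    qed
    then show ?thesis using B(2) by auto
  qed
  have ff': "f a = f' ((1-e)*a)" for a
  proof -
    have "M ((1-e)*a*b) = \<Lambda> (a*b)" for b
    proof -
      have "e*((1-e)*a*b) = 0" using ee by (simp add: algebra_simps)
      moreover have "(1-e)*a*b = a*b - e*(a*b)" by (simp add: algebra_simps)
      ultimately show ?thesis unfolding M_def using M0 LD ez by simp
    qed
    then show ?thesis unfolding f_def f'_def by (auto simp: mult.assoc)
  qed
  have sub1: "range f \<subseteq> range f'" using ff' by auto
  define g where "g = f' e"
  have gr: "g \<in> range f'" unfolding g_def by simp
  have ge: "g e = 1"
  proof -
    have "\<Lambda> e = 0" using ez[rule_format, of 1] by simp
    then show ?thesis unfolding g_def f'_def M_def using ee mue by simp
  qed
  have spanf: "FS.span (range f) \<subseteq> {h. h e = 0}"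
  proof (rule FS.span_minimal)
    show "range f \<subseteq> {h. h e = 0}" using ez unfolding f_def by (auto simp: mult.commute)
    show "FS.subspace {h. h e = 0}" unfolding FS.subspace_def by auto
  qed
  have gnot: "g \<notin> FS.span (range f)" using spanf ge by auto
  obtain A where A: "A \<subseteq> range f" "FS.independent A" "range f \<subseteq> FS.span A"
      "card A = FS.dim (range f)"
    using FS.basis_exists[of "range f"] by blast
  obtain C where C: "C \<subseteq> range f'" "FS.independent C" "range f' \<subseteq> FS.span C"
      "card C = FS.dim (range f')"
    using FS.basis_exists[of "range f'"] by blast
  have fC: "finite C"
    using FS.independent_span_bound[OF _ C(2), of "f' ` B"] B(1) C(1) spanf' by auto
  have spA: "FS.span A \<subseteq> FS.span (range f)" using A(1) FS.span_mono by blast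
  have gA: "g \<notin> FS.span A" using gnot spA by blast
  have iA: "FS.independent (insert g A)" using FS.independent_insertI[OF gA A(2)] .
  have "insert g A \<subseteq> FS.span C" using A(1) sub1 gr C(3) by blast
  from FS.independent_span_bound[OF fC iA this]
  have fin: "finite (insert g A)" and cle: "card (insert g A) \<le> card C" by auto
  have "g \<notin> A" using gA FS.span_base by blast
  then have "card (insert g A) = Suc (card A)" using fin by simp
  then have "FS.dim (range f) < FS.dim (range f')" using cle A(4) C(4) by simp
  then have "bform_rank scale \<Lambda> < bform_rank scale M"
    unfolding bform_rank_def f_def f'_def by simp
  then show ?thesis using linM by blast
qed

theorem theorem3p5:
  fixes scale :: "'k::alg_closed_field \<Rightarrow> 'a::comm_ring_1 \<Rightarrow> 'a"
    and \<Lambda> :: "'a \<Rightarrow> 'k"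
  assumes "comm_K_algebra scale"
    and "fin_dim scale"
    and "Vector_Spaces.linear scale (*) \<Lambda>"
    and "\<forall>M. Vector_Spaces.linear scale (*) M \<longrightarrow> bform_rank scale M \<le> bform_rank scale \<Lambda>"
  shows "RLam \<Lambda> \<subseteq> Rad"
proof
  fix a assume aR: "a \<in> RLam \<Lambda>"
  show "a \<in> Rad"
  proof (rule ccontr)
    assume "a \<notin> Rad"
    then have nz: "a^n \<noteq> 0" for n unfolding Rad_def by auto
    have vs: "vector_space scale" and comp: "\<forall>c a b. scale c (a*b) = scale c a * b"
      using assms(1) unfolding comm_K_algebra_def by auto
    obtain N c where N: "N \<ge> 1" "a^N = a^(2*N) * c"
      using idem_exists[OF vs comp assms(2), of a] by blast
    define e where "e = a^N * c"
    have pw: "a^(2*N) = a^N * a^N" by (simp add: mult_2 power_add)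
    have ee: "e*e = e" using N(2) pw unfolding e_def by (simp add: algebra_simps)
    have "a^N = a^N * e" using N(2) pw unfolding e_def by (simp add: algebra_simps)
    then have en: "e \<noteq> 0" using nz[of N] by auto
    have ea: "e = a * (a^(N-1) * c)" unfolding e_def using N(1)
      by (metis (no_types) mult.assoc power_Suc Suc_pred' less_le_trans zero_less_one)
    have ez: "\<forall>x. \<Lambda> (e*x) = 0" using aR unfolding RLam_def ea by (simp add: mult.assoc)
    obtain M where "Vector_Spaces.linear scale (*) M" "bform_rank scale \<Lambda> < bform_rank scale M"
      using rank_increase[OF assms(1,2,3) ee en ez] by blast
    then show False using assms(4) by force
  qed
qed

end
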